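(* Let $X$ be a binary $N\times t$ matrix that is 3-good, let $S\subseteq[t]$ with $|S|=3$, $\mathbf{y}=r(X,S)$, $H=H(X,3,\mathbf{y})=([t],E)$, $L_1=\log_2\log_2 t$, $L_2=3L_1$. Let $G'=([t],E')$ be the graph in which distinct vertices $v_1,v_2$ are adjacent iff at least $L_2$ hyperedges of $E$ contain both, and let $E_1\subseteq E$ be the set of hyperedges containing some edge of $G'$ as a subset. For each $e\in E_1$ choose (arbitrarily) an additional vertex $v\in e$ such that $e\setminus\{v\}\in E'$. Let $G''=([t],E'')$ be the directed graph (without multiple arcs) containing, for every $e=\{v_1,v_2,v_3\}\in E_1$ with chosen additional vertex $v_1$, the arcs $(v_1,v_2),(v_1,v_3),(v_2,v_3),(v_3,v_2)$, and no other arcs. Then every vertex of $G''$ has out-degree less than $3L_1^2$.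
   Context: For a binary $N\times t$ matrix $X$ with columns $x(1),\dots,x(t)$ and $S\subseteq[t]$, $r(X,S)=\bigvee_{j\in S}x(j)$ (coordinatewise Boolean OR). For $\mathbf{y}\in\{0,1\}^N$, $H(X,3,\mathbf{y})$ is the $3$-uniform hypergraph on $[t]$ whose hyperedges are all $3$-element $S\subseteq[t]$ with $r(X,S)=\mathbf{y}$. A $(3,k)$ configuration of size $L$ is a set of $L$ hyperedges $e_1,\dots,e_L$ with a set $U$, $|U|=k$, such that $e_i\cap e_j=U$ for all $i\ne j$. Fix $p\in(0,1)$; $\Pr_1(s,w)$ is the probability that the OR of $s$ independent uniformly random length-$N$ binary columns of weight $\lfloor pN\rfloor$ equals a fixed vector of weight $w$; $\Pr_2(s,w_1,w)$ is the probability that the OR of $s$ such columns together with a fixed column $\mathbf{y}_1$ of weight $w_1$ equals a fixed vector $\mathbf{y}$ of weight $w$ with $\mathbf{y}\vee\mathbf{y}_1=\mathbf{y}$. With $L_1=\log_2\log_2 t$, $X$ is 3-good if: (1) for every $\mathbf{y}$, $H(X,3,\mathbf{y})$ has no $(3,1)$ configuration of size $L_1$; (2) for every $\mathbf{y}$ with $|\mathbf{y}|=w$, $H(X,3,\mathbf{y})$ has no $(3,0)$ configuration of size $10\max(t^3\Pr_1(3,w),N)$; (3) for all $\mathbf{y},\mathbf{y}_1$ with $\mathbf{y}\vee\mathbf{y}_1=\mathbf{y}$, $|\mathbf{y}_1|=w_1$, $|\mathbf{y}|=w$, the number of $j$ with $\mathbf{y}_1\vee x(j)=\mathbf{y}$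 is less than $10B(N,t)$, where $B(N,t)=t\Pr_2(1,w_1,w)$ if this exceeds $N$, $B(N,t)=N$ if $t^{-1/\sqrt{L_1}}\le t\Pr_2(1,w_1,w)\le N$, and $B(N,t)=L_1/10$ if $t\Pr_2(1,w_1,w)<t^{-1/\sqrt{L_1}}$; (4) for every $\mathbf{y}$ with $|\mathbf{y}|=w$ and integer $w_1\le w$, the number of pairwise disjoint pairs $\{j_1,j_2\}\subseteq[t]$ with $x(j_1)\vee x(j_2)\vee\mathbf{y}=\mathbf{y}$ and $|x(j_1)\vee x(j_2)|=w_1$ is less than $10\max(N,\binom{w}{w_1}t^2\Pr_1(2,w_1))$. *)

theory Defs
  imports Complex_Main "HOL-Library.FuncSet"
begin

text \<open>A binary N x t matrix is X :: nat => nat => bool, entry (i,j) = X i j for i < N, j < t.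
  Rows are indexed by {..<N}, columns by [t] = {..<t}. A binary vector of length N is
  identified with its support, a subset of {..<N}; Boolean OR is union, weight is card.\<close>

definition col :: "nat \<Rightarrow> (nat \<Rightarrow> nat \<Rightarrow> bool) \<Rightarrow> nat \<Rightarrow> nat set" where
  "col N X j = {i. i < N \<and> X i j}"

definition rX :: "nat \<Rightarrow> (nat \<Rightarrow> nat \<Rightarrow> bool) \<Rightarrow> nat set \<Rightarrow> nat set" where
  "rX N X S = (\<Union>j\<in>S. col N X j)"

definition Hedges :: "nat \<Rightarrow> nat \<Rightarrow> (nat \<Rightarrow> nat \<Rightarrow> bool) \<Rightarrow> nat set \<Rightarrow> nat set set" where
  "Hedges N t X y = {S. S \<subseteq> {..<t} \<and> card S = 3 \<and> rX N X S = y}"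

definition has_config :: "nat set set \<Rightarrow> nat \<Rightarrow> real \<Rightarrow> bool" where
  "has_config E k L = (\<exists>F U. F \<subseteq> E \<and> finite F \<and> real (card F) \<ge> L \<and> card U = k \<and>
      (\<forall>e\<in>F. U \<subseteq> e) \<and> (\<forall>e1\<in>F. \<forall>e2\<in>F. e1 \<noteq> e2 \<longrightarrow> e1 \<inter> e2 = U))"

definition wcols :: "nat \<Rightarrow> real \<Rightarrow> nat set set" where
  "wcols N p = {A. A \<subseteq> {..<N} \<and> card A = nat \<lfloor>p * real N\<rfloor>}"

text \<open>Pr_1(s,w): probability that the OR of s independent uniform random columns of weight
  floor(pN) equals a fixed vector of weight w (by symmetry, the vector with support {..<w}).\<close>
definition Pr1 :: "nat \<Rightarrow> real \<Rightarrow> nat \<Rightarrow> nat \<Rightarrow> real" where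
  "Pr1 N p s w = real (card {f \<in> {..<s} \<rightarrow>\<^sub>E wcols N p. (\<Union>i<s. f i) = {..<w}})
                 / real (card (wcols N p)) ^ s"

text \<open>Pr_2(s,w1,w): probability that y1 OR (OR of s random columns) equals y, for fixed
  y1 \<subseteq> y with |y1| = w1, |y| = w (by symmetry y1 = {..<w1}, y = {..<w}).\<close>
definition Pr2 :: "nat \<Rightarrow> real \<Rightarrow> nat \<Rightarrow> nat \<Rightarrow> nat \<Rightarrow> real" where
  "Pr2 N p s w1 w = real (card {f \<in> {..<s} \<rightarrow>\<^sub>E wcols N p. {..<w1} \<union> (\<Union>i<s. f i) = {..<w}})
                 / real (card (wcols N p)) ^ s"

definition L1 :: "nat \<Rightarrow> real" where
  "L1 t = log 2 (log 2 (real t))"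

definition Bnt :: "nat \<Rightarrow> nat \<Rightarrow> real \<Rightarrow> nat \<Rightarrow> nat \<Rightarrow> real" where
  "Bnt N t p w1 w =
     (let a = real t * Pr2 N p 1 w1 w in
      if a > real N then a
      else if real t powr (- 1 / sqrt (L1 t)) \<le> a then real N
      else L1 t / 10)"

definition good3 :: "nat \<Rightarrow> nat \<Rightarrow> real \<Rightarrow> (nat \<Rightarrow> nat \<Rightarrow> bool) \<Rightarrow> bool" where
  "good3 N t p X =
    ((\<forall>y. \<not> has_config (Hedges N t X y) 1 (L1 t)) \<and>
     (\<forall>y. y \<subseteq> {..<N} \<longrightarrow>
        \<not> has_config (Hedges N t X y) 0
             (10 * max (real t ^ 3 * Pr1 N p 3 (card y)) (real N))) \<and>
     (\<forall>y y1. y \<subseteq> {..<N} \<longrightarrow> y1 \<subseteq> y \<longrightarrow>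
        real (card {j \<in> {..<t}. y1 \<union> col N X j = y}) < 10 * Bnt N t p (card y1) (card y)) \<and>
     (\<forall>y w1. y \<subseteq> {..<N} \<longrightarrow> w1 \<le> card y \<longrightarrow>
        (\<forall>P. (\<forall>q\<in>P. q \<subseteq> {..<t} \<and> card q = 2 \<and> (\<Union>j\<in>q. col N X j) \<subseteq> y
                      \<and> card (\<Union>j\<in>q. col N X j) = w1) \<and>
             (\<forall>q1\<in>P. \<forall>q2\<in>P. q1 \<noteq> q2 \<longrightarrow> q1 \<inter> q2 = {}) \<longrightarrow>
           real (card P) < 10 * max (real N)
              (real (card y choose w1) * real t ^ 2 * Pr1 N p 2 w1))))"

definition codeg :: "nat set set \<Rightarrow> nat \<Rightarrow> nat \<Rightarrow> nat" where
  "codeg E u v = card {e\<in>E. {u, v} \<subseteq> e}"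

definition Gprime :: "nat \<Rightarrow> nat set set \<Rightarrow> real \<Rightarrow> nat set set" where
  "Gprime t E L = {{u, v} |u v. u < t \<and> v < t \<and> u \<noteq> v \<and> real (codeg E u v) \<ge> L}"

definition E1set :: "nat set set \<Rightarrow> nat set set \<Rightarrow> nat set set" where
  "E1set E E' = {e\<in>E. \<exists>d\<in>E'. d \<subseteq> e}"

definition arcs :: "nat set set \<Rightarrow> (nat set \<Rightarrow> nat) \<Rightarrow> (nat \<times> nat) set" where
  "arcs E1 c = {(c e, v) |e v. e \<in> E1 \<and> v \<in> e \<and> v \<noteq> c e} \<union>
               {(u, v) |e u v. e \<in> E1 \<and> u \<in> e - {c e} \<and> v \<in> e - {c e} \<and> u \<noteq> v}"

end

theory Submission
  imports Defs
begin

lemma greedy_choice: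
  assumes "finite A" "\<forall>a\<in>A. card (S a) \<ge> card A"
  shows "\<exists>f. inj_on f A \<and> (\<forall>a\<in>A. f a \<in> S a)"
  using assms
proof (induction A rule: finite_induct)
  case empty
  then show ?case by auto
next
  case (insert a A)
  then have "\<forall>b\<in>A. card (S b) \<ge> card A" by auto
  with insert obtain f where f: "inj_on f A" "\<forall>b\<in>A. f b \<in> S b" by blast
  have ca: "card (S a) \<ge> card A + 1" using insert by auto
  have "\<not> S a \<subseteq> f ` A"
  proof
    assume "S a \<subseteq> f ` A"
    then have "card (S a) \<le> card (f ` A)" using insert(1) by (simp add: card_mono)
    also have "\<dots> \<le> card A" by (rule card_image_le[OF insert(1)])
    finally show False using ca by simp
  qed
  then obtain z where z: "z \<in> S a" "z \<notin> f ` A" by blast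
  have "inj_on (f(a := z)) (insert a A)"
    using f(1) z(2) insert(2) by (auto simp: inj_on_def image_iff)
  moreover have "\<forall>b\<in>insert a A. (f(a := z)) b \<in> S b" using f(2) z(1) insert(2) by auto
  ultimately show ?case by blast
qed

lemma three_elem:
  assumes "card e = 3" "x \<in> e" "a \<in> e" "x \<noteq> a"
  shows "\<exists>z. z \<noteq> x \<and> z \<noteq> a \<and> e = {x, a, z}"
proof -
  have fe: "finite e" using assms(1) by (metis card.infinite zero_neq_numeral)
  have "card (e - {x, a}) = 1" using assms fe by (simp add: card_Diff_subset)
  then obtain z where z: "e - {x, a} = {z}" by (meson card_1_singletonE)
  then have "e = {x, a, z}" using assms(2,3) by auto
  moreover have "z \<noteq> x \<and> z \<noteq> a" using z by auto
  ultimately show ?thesis by blast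
qed

lemma codeg_sym: "codeg E a b = codeg E b a"
  unfolding codeg_def by (simp add: insert_commute)

theorem lemma5:
  fixes N t :: nat and p :: real and X :: "nat \<Rightarrow> nat \<Rightarrow> bool"
    and S :: "nat set" and c :: "nat set \<Rightarrow> nat"
  assumes "0 < p" and "p < 1"
    and "good3 N t p X"
    and "S \<subseteq> {..<t}" and "card S = 3"
    and "\<forall>e \<in> E1set (Hedges N t X (rX N X S))
              (Gprime t (Hedges N t X (rX N X S)) (3 * L1 t)).
           c e \<in> e \<and> e - {c e} \<in> Gprime t (Hedges N t X (rX N X S)) (3 * L1 t)"
  shows "\<forall>v < t. real (card {w. (v, w) \<in> arcs (E1set (Hedges N t X (rX N X S))
              (Gprime t (Hedges N t X (rX N X S)) (3 * L1 t))) c}) < 3 * (L1 t)^2"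
proof (intro allI impI)
  fix v assume "v < t"
  define E where "E = Hedges N t X (rX N X S)"
  define L where "L = L1 t"
  define G where "G = Gprime t E (3 * L)"
  define E1 where "E1 = E1set E G"
  have hc: "\<forall>e \<in> E1. c e \<in> e \<and> e - {c e} \<in> G"
    using assms(6) unfolding E1_def G_def E_def L_def by simp
  have ncfg: "\<not> has_config E 1 L"
  proof -
    have "\<forall>y. \<not> has_config (Hedges N t X y) 1 (L1 t)"
      using assms(3) unfolding good3_def by (rule conjunct1)
    then show ?thesis unfolding E_def L_def by (rule spec)
  qed
  have Esub: "\<And>e. e \<in> E \<Longrightarrow> e \<subseteq> {..<t} \<and> card e = 3"
    unfolding E_def Hedges_def by auto
  have finE: "finite E"
    by (rule finite_subset[of _ "Pow {..<t}"]) (use Esub in auto)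
  have Lpos: "L > 0"
  proof (rule ccontr)
    assume "\<not> L > 0"
    then have "has_config E 1 L"
      unfolding has_config_def by (rule_tac x="{}" in exI, rule_tac x="{0}" in exI) auto
    with ncfg show False by simp
  qed
  define K where "K = nat \<lceil>L\<rceil> - 1"
  have c1: "0 < \<lceil>L\<rceil>" using Lpos by simp
  obtain m where m: "\<lceil>L\<rceil> = int m" "m \<ge> 1" using c1 by (metis int_one_le_iff_zero_less nonneg_int_cases of_nat_le_iff of_nat_1 less_le)
  have iK: "int K = \<lceil>L\<rceil> - 1" using m unfolding K_def by simp
  then have rK: "real K = real_of_int \<lceil>L\<rceil> - 1" by (metis of_int_of_nat_eq of_int_diff of_int_1)
  have K1: "real K < L" using rK ceiling_correct[of L] by linarith
  have K2: "n \<le> K" if "real n < L" for n :: nat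
  proof -
    have "int n < \<lceil>L\<rceil>" using that by (simp add: less_ceiling_iff)
    then show "n \<le> K" using iK by linarith
  qed
  have SF: "card F \<le> K" if "F \<subseteq> E" "\<forall>e\<in>F. x \<in> e"
     "\<forall>e1\<in>F. \<forall>e2\<in>F. e1 \<noteq> e2 \<longrightarrow> e1 \<inter> e2 = {x}" for F x
  proof -
    have fF: "finite F" using finE that(1) finite_subset by blast
    show ?thesis
    proof (rule ccontr)
      assume "\<not> card F \<le> K"
      then have "L \<le> real (card F)" using K2 by (metis not_less)
      then have "has_config E 1 L" unfolding has_config_def using fF that
        by (intro exI[of _ F] exI[of _ "{x}"]) simp
      with ncfg show False by simp
    qed
  qed
  define Hi where "Hi x = {w. w \<noteq> x \<and> 3 * L \<le> real (codeg E x w)}" for x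
  have codeg_ge: "codeg E x w \<ge> 3 * K + 1" if "w \<in> Hi x" for x w
  proof -
    have "real (codeg E x w) > 3 * real K" using that K1 unfolding Hi_def by auto
    then show ?thesis by linarith
  qed
  have Hi_lt: "w < t" if "w \<in> Hi x" for x w
  proof -
    have "codeg E x w \<noteq> 0" using codeg_ge[OF that] by simp
    then obtain e where "e \<in> E" "{x, w} \<subseteq> e" unfolding codeg_def
      by (metis (no_types, lifting) card.empty empty_Collect_eq)
    then show ?thesis using Esub by auto
  qed
  have finHi: "finite (Hi x)" for x
    by (rule finite_subset[of _ "{..<t}"]) (use Hi_lt in auto)
  have cardHi: "card (Hi x) \<le> K" for x
  proof (rule ccontr)
    assume "\<not> card (Hi x) \<le> K"
    then obtain A where A: "A \<subseteq> Hi x" "card A = K + 1"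
      by (metis not_less_eq_eq obtain_subset_with_card_n Suc_eq_plus1)
    have finA: "finite A" using A finHi finite_subset by blast
    define T where "T a = {z. z \<noteq> x \<and> z \<noteq> a \<and> {x, a, z} \<in> E}" for a
    have finT: "finite (T a)" for a
      by (rule finite_subset[of _ "{..<t}"]) (use Esub in \<open>auto simp: T_def\<close>)
    have cT: "card (T a) \<ge> 3 * K + 1" if "a \<in> A" for a
    proof -
      have ax: "a \<noteq> x" using that A unfolding Hi_def by auto
      have "{e\<in>E. {x, a} \<subseteq> e} \<subseteq> (\<lambda>z. {x, a, z}) ` T a"
      proof
        fix e assume "e \<in> {e\<in>E. {x, a} \<subseteq> e}"
        then have "e \<in> E" "x \<in> e" "a \<in> e" by auto
        then obtain z where "z \<noteq> x" "z \<noteq> a" "e = {x, a, z}"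
          using three_elem[of e x a] Esub ax by metis
        then show "e \<in> (\<lambda>z. {x, a, z}) ` T a" using \<open>e \<in> E\<close> unfolding T_def by auto
      qed
      then have "codeg E x a \<le> card ((\<lambda>z. {x, a, z}) ` T a)"
        unfolding codeg_def using finT by (simp add: card_mono)
      also have "\<dots> \<le> card (T a)" using finT card_image_le by blast
      finally show ?thesis using codeg_ge[of a x] that A by auto
    qed
    have "\<forall>a\<in>A. card (T a - A) \<ge> card A"
    proof
      fix a assume a: "a \<in> A"
      have "T a - A = T a - (A - {a})" unfolding T_def by auto
      moreover have "card (T a) - card (A - {a}) \<le> card (T a - (A - {a}))"
        by (rule diff_card_le_card_Diff) (use finA in simp)
      moreover have "card (A - {a}) = K" using A a finA by simp
      ultimately show "card (T a - A) \<ge> card A" using cT[OF a] A by simp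
    qed
    then obtain f where f: "inj_on f A" "\<forall>a\<in>A. f a \<in> T a - A"
      using greedy_choice[OF finA, of "\<lambda>a. T a - A"] by blast
    define F where "F = (\<lambda>a. {x, a, f a}) ` A"
    have xA: "x \<notin> A" using A unfolding Hi_def by auto
    have "inj_on (\<lambda>a. {x, a, f a}) A"
    proof (rule inj_onI)
      fix a b assume ab: "a \<in> A" "b \<in> A" "{x, a, f a} = {x, b, f b}"
      then have "a \<in> {x, b, f b}" by auto
      then show "a = b" using ab xA f(2) by auto
    qed
    then have cF: "card F = K + 1" unfolding F_def using A card_image by metis
    have "F \<subseteq> E" unfolding F_def using f(2) unfolding T_def by auto
    moreover have "\<forall>e\<in>F. x \<in> e" unfolding F_def by auto
    moreover have "\<forall>e1\<in>F. \<forall>e2\<in>F. e1 \<noteq> e2 \<longrightarrow> e1 \<inter> e2 = {x}"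
    proof (intro ballI impI)
      fix e1 e2 assume "e1 \<in> F" "e2 \<in> F" "e1 \<noteq> e2"
      then obtain a b where ab: "a \<in> A" "b \<in> A" "e1 = {x, a, f a}" "e2 = {x, b, f b}" "a \<noteq> b"
        unfolding F_def by auto
      have "f a \<noteq> f b" using f(1) ab unfolding inj_on_def by blast
      moreover have "f a \<noteq> x" "f b \<noteq> x" "f a \<notin> A" "f b \<notin> A"
        using f(2) ab unfolding T_def by auto
      ultimately show "e1 \<inter> e2 = {x}" using ab xA by auto
    qed
    ultimately have "card F \<le> K" by (rule SF)
    with cF show False by simp
  qed
  define Qe where "Qe = {q. \<exists>a b. q = {a, b} \<and> a \<noteq> b \<and> insert v q \<in> E \<and>
                        3 * L \<le> real (codeg E a b) \<and> v \<notin> q}"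
  have Qe_Hi: "w \<in> Hi u" if h: "q \<in> Qe" "w \<in> q" "u \<in> q" "u \<noteq> w" for q w u
  proof -
    obtain a b where ab: "q = {a, b}" "a \<noteq> b" "3 * L \<le> real (codeg E a b)"
      using h(1) unfolding Qe_def by blast
    have "(w = a \<and> u = b) \<or> (w = b \<and> u = a)" using h(2-4) ab(1) by blast
    then show ?thesis
    proof
      assume "w = a \<and> u = b"
      then show ?thesis using ab codeg_sym[of E a b] unfolding Hi_def by simp
    next
      assume "w = b \<and> u = a"
      then show ?thesis using ab unfolding Hi_def by simp
    qed
  qed
  have Qe_other: "\<exists>u\<in>q. u \<noteq> w" if h: "q \<in> Qe" "w \<in> q" for q w
  proof -
    obtain a b where ab: "q = {a, b}" "a \<noteq> b" using h(1) unfolding Qe_def by blast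
    then show ?thesis using h(2) by auto
  qed
  have Qe_card: "card q = 2" if h: "q \<in> Qe" for q
  proof -
    obtain a b where ab: "q = {a, b}" "a \<noteq> b" using h(1) unfolding Qe_def by blast
    then show ?thesis by simp
  qed
  have finQe: "finite Qe"
  proof (rule finite_subset[of _ "Pow {..<t}"])
    show "Qe \<subseteq> Pow {..<t}"
    proof
      fix q assume "q \<in> Qe"
      then have "insert v q \<in> E" unfolding Qe_def by blast
      then have "insert v q \<subseteq> {..<t}" using Esub by blast
      then show "q \<in> Pow {..<t}" by blast
    qed
  qed simp
  define D where "D = {P. P \<subseteq> Qe \<and> (\<forall>q1\<in>P. \<forall>q2\<in>P. q1 \<noteq> q2 \<longrightarrow> q1 \<inter> q2 = {})}"
  have "finite D" unfolding D_def using finQe by (rule_tac finite_subset[of _ "Pow Qe"]) auto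
  moreover have "{} \<in> D" unfolding D_def by auto
  ultimately obtain P where P: "P \<in> D" "\<forall>P'\<in>D. P \<le> P' \<longrightarrow> P = P'"
    using finite_has_maximal by blast
  have PQ: "P \<subseteq> Qe" and Pdisj: "\<forall>q1\<in>P. \<forall>q2\<in>P. q1 \<noteq> q2 \<longrightarrow> q1 \<inter> q2 = {}"
    using P(1) unfolding D_def by auto
  have finP: "finite P" using PQ finQe finite_subset by blast
  have cardP: "card P \<le> K"
  proof -
    have vnq: "\<forall>q\<in>P. v \<notin> q" using PQ unfolding Qe_def by blast
    have inj: "inj_on (insert v) P"
    proof (rule inj_onI)
      fix q1 q2 assume h: "q1 \<in> P" "q2 \<in> P" "insert v q1 = insert v q2"
      have "q1 = insert v q1 - {v}" using vnq h(1) by simp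
      also have "\<dots> = insert v q2 - {v}" using h(3) by simp
      also have "\<dots> = q2" using vnq h(2) by simp
      finally show "q1 = q2" .
    qed
    have "insert v ` P \<subseteq> E" using PQ unfolding Qe_def by blast
    moreover have "\<forall>e\<in>insert v ` P. v \<in> e" by blast
    moreover have "\<forall>e1\<in>insert v ` P. \<forall>e2\<in>insert v ` P. e1 \<noteq> e2 \<longrightarrow> e1 \<inter> e2 = {v}"
    proof (intro ballI impI)
      fix e1 e2 assume h: "e1 \<in> insert v ` P" "e2 \<in> insert v ` P" "e1 \<noteq> e2"
      then obtain q1 q2 where q: "q1 \<in> P" "q2 \<in> P" "e1 = insert v q1" "e2 = insert v q2"
        by blast
      then have "q1 \<noteq> q2" using h(3) by blast
      then have "q1 \<inter> q2 = {}" using Pdisj q(1,2) by blast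
      then show "e1 \<inter> e2 = {v}" using q(3,4) by blast
    qed
    ultimately have "card (insert v ` P) \<le> K" by (rule SF)
    then show ?thesis using card_image[OF inj] by simp
  qed
  have cover: "\<exists>q'\<in>P. q \<inter> q' \<noteq> {}" if hq: "q \<in> Qe" for q
  proof (rule ccontr)
    assume nc: "\<not> (\<exists>q'\<in>P. q \<inter> q' \<noteq> {})"
    have nc2: "\<forall>q'\<in>P. q \<inter> q' = {} \<and> q' \<inter> q = {}" using nc by (simp add: Int_commute)
    have d2: "\<forall>q1\<in>insert q P. \<forall>q2\<in>insert q P. q1 \<noteq> q2 \<longrightarrow> q1 \<inter> q2 = {}"
      using nc2 Pdisj by (metis insert_iff)
    have "insert q P \<subseteq> Qe" using hq PQ by blast
    then have "insert q P \<in> D" using d2 unfolding D_def by blast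
    then have "P = insert q P" using P(2) by (meson subset_insertI)
    then have qP: "q \<in> P" by blast
    have "q \<noteq> {}" using Qe_card[OF hq] by (metis card.empty zero_neq_numeral)
    then show False using nc qP by (metis Int_absorb)
  qed
  have type1: "w \<in> (\<Union>x\<in>\<Union>P. Hi x)" if hq: "q \<in> Qe" "w \<in> q" for q w
  proof -
    obtain q' y where q': "q' \<in> P" "y \<in> q" "y \<in> q'" using cover[OF hq(1)] by blast
    show ?thesis
    proof (cases "y = w")
      case True
      obtain u where "u \<in> q'" "u \<noteq> w" using Qe_other[of q' w] q' PQ True by blast
      then have "w \<in> Hi u" using Qe_Hi[of q' w u] q' PQ True by blast
      then show ?thesis using \<open>u \<in> q'\<close> q' by blast
    next
      case False
      then have "w \<in> Hi y" using Qe_Hi[of q w y] hq q' by blast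
      then show ?thesis using q' by blast
    qed
  qed
  have Gp: "\<exists>a b. q = {a, b} \<and> a \<noteq> b \<and> 3 * L \<le> real (codeg E a b)" if "q \<in> G" for q
    using that unfolding G_def Gprime_def by auto
  have E1E: "E1 \<subseteq> E" unfolding E1_def E1set_def by auto
  define Out where "Out = {w. (v, w) \<in> arcs E1 c}"
  have Osub: "Out \<subseteq> Hi v \<union> (\<Union>x\<in>\<Union>P. Hi x)"
  proof
    fix w assume "w \<in> Out"
    then have "(v, w) \<in> arcs E1 c" unfolding Out_def by simp
    then consider (a) e where "e \<in> E1" "v = c e" "w \<in> e" "w \<noteq> c e"
      | (b) e where "e \<in> E1" "v \<in> e - {c e}" "w \<in> e - {c e}" "v \<noteq> w"
      unfolding arcs_def by blast
    then show "w \<in> Hi v \<union> (\<Union>x\<in>\<Union>P. Hi x)"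
    proof cases
      case a
      have ce: "c e \<in> e" "e - {c e} \<in> G" using hc a(1) by auto
      then obtain a1 b1 where ab: "e - {v} = {a1, b1}" "a1 \<noteq> b1" "3 * L \<le> real (codeg E a1 b1)"
        using Gp a(2) by blast
      have "insert v (e - {v}) = e" using ce a(2) by auto
      then have "e - {v} \<in> Qe" unfolding Qe_def using ab E1E a(1) by auto
      moreover have "w \<in> e - {v}" using a by auto
      ultimately show ?thesis using type1 by blast
    next
      case b
      have "e - {c e} \<in> G" using hc b(1) by auto
      then obtain a1 b1 where ab: "e - {c e} = {a1, b1}" "a1 \<noteq> b1" "3 * L \<le> real (codeg E a1 b1)"
        using Gp by blast
      then have "{v, w} = {a1, b1}" using b by auto
      then have "3 * L \<le> real (codeg E v w)" using ab(3) codeg_sym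
        by (metis doubleton_eq_iff)
      then show ?thesis unfolding Hi_def using b by auto
    qed
  qed
  have finUP: "finite (\<Union>P)" using finP PQ Qe_card
    by (metis card.infinite finite_Union subsetD zero_neq_numeral)
  have cUP: "card (\<Union>P) \<le> 2 * K"
  proof -
    have "card (\<Union>P) \<le> sum card P" by (rule card_Union_le_sum_card)
    also have "\<dots> = sum (\<lambda>_. 2) P" using PQ Qe_card by (intro sum.cong) auto
    also have "\<dots> = 2 * card P" by simp
    finally show ?thesis using cardP by simp
  qed
  have finU: "finite (\<Union>x\<in>\<Union>P. Hi x)" by (rule finite_UN_I[OF finUP]) (rule finHi)
  have "card Out \<le> card (Hi v \<union> (\<Union>x\<in>\<Union>P. Hi x))"
    by (rule card_mono[OF finite_UnI[OF finHi finU] Osub])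
  also have "\<dots> \<le> card (Hi v) + card (\<Union>x\<in>\<Union>P. Hi x)" by (rule card_Un_le)
  also have "\<dots> \<le> K + (\<Sum>x\<in>\<Union>P. card (Hi x))" using cardHi card_UN_le[OF finUP] add_mono by blast
  also have "\<dots> \<le> K + (\<Sum>x\<in>\<Union>P. K)" by (intro add_left_mono sum_mono cardHi)
  also have "\<dots> = K + card (\<Union>P) * K" by simp
  also have "\<dots> \<le> K + 2 * K * K" using cUP by simp
  finally have cO: "card Out \<le> K + 2 * K * K" .
  have "real (card Out) < 3 * L ^ 2"
  proof (cases "K = 0")
    case True
    then show ?thesis using cO Lpos by simp
  next
    case False
    have "K \<le> K * K" using False by simp
    then have "card Out \<le> 3 * (K * K)" using cO by linarith
    then have "real (card Out) \<le> 3 * real K ^ 2" by (simp add: power2_eq_square) (metis of_nat_le_iff of_nat_mult of_nat_numeral)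
    also have "\<dots> < 3 * L ^ 2" using K1 by (simp add: power_strict_mono)
    finally show ?thesis .
  qed
  then show "real (card {w. (v, w) \<in> arcs (E1set (Hedges N t X (rX N X S))
              (Gprime t (Hedges N t X (rX N X S)) (3 * L1 t))) c}) < 3 * (L1 t)^2"
    unfolding Out_def E1_def G_def E_def L_def .
qed

end
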